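(* Let $G$ be a group with a BN-pair $(B,N)$ carrying two group topologies $\mathcal{S}\subseteq\mathcal{T}$, and suppose $B\in\mathcal{S}$ (i.e. $B$ is $\mathcal{S}$-open). Let $\widehat{\mathrm{Id}}:\widehat{(G,\mathcal{T})}\to\widehat{(G,\mathcal{S})}$ be the unique continuous extension of the identity, and $\widehat{\mathrm{Id}_B}:\widehat{(B,\mathcal{T}_B)}\to\widehat{(B,\mathcal{S}_B)}$ the analogous map for the restricted topologies on $B$. Then $\ker\widehat{\mathrm{Id}}=\ker\widehat{\mathrm{Id}_B}$.
   Context: Completions are right uniform completions (minimal Cauchy filters), which are monoids; the kernel of a monoid homomorphism means the preimage of $1$. $\mathcal{T}_B,\mathcal{S}_B$ are the subspace topologies on $B$, and $\widehat{(B,\mathcal{T}_B)}$ is identified with the closure of $B$ in $\widehat{(G,\mathcal{T})}$. *)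

theory Defs
  imports "HOL-Analysis.Analysis" "HOL-Algebra.Algebra"
begin

text \<open>The Weyl group W = N/H (H = B \<inter> N) is
  generated by a set of involutions, given here by a set R of representatives in N
  (r \<notin> H, r r \<in> H, and R \<union> H generates N).\<close>
definition BN_pair :: "('a, 'b) monoid_scheme \<Rightarrow> 'a set \<Rightarrow> 'a set \<Rightarrow> bool" where
  "BN_pair G B N \<longleftrightarrow>
     subgroup B G \<and> subgroup N G \<and>
     generate G (B \<union> N) = carrier G \<and>
     normal (B \<inter> N) (G\<lparr>carrier := N\<rparr>) \<and>
     (\<exists>R. R \<subseteq> N \<and>
        (\<forall>r\<in>R. r \<notin> B \<inter> N \<and> r \<otimes>\<^bsub>G\<^esub> r \<in> B \<inter> N) \<and>
        generate G (R \<union> (B \<inter> N)) = N \<and>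
        (\<forall>r\<in>R. \<forall>n\<in>N.
           set_mult G (r <#\<^bsub>G\<^esub> B) {n} \<subseteq>
             set_mult G (B #>\<^bsub>G\<^esub> n) B \<union> set_mult G (B #>\<^bsub>G\<^esub> (r \<otimes>\<^bsub>G\<^esub> n)) B) \<and>
        (\<forall>r\<in>R. (r <#\<^bsub>G\<^esub> B) #>\<^bsub>G\<^esub> r \<noteq> B))"

definition group_topology :: "('a, 'b) monoid_scheme \<Rightarrow> 'a topology \<Rightarrow> bool" where
  "group_topology G T \<longleftrightarrow>
     topspace T = carrier G \<and>
     continuous_map (prod_topology T T) T (\<lambda>(x, y). x \<otimes>\<^bsub>G\<^esub> y) \<and>
     continuous_map T T (\<lambda>x. inv\<^bsub>G\<^esub> x)"

text \<open>Cauchy filters for the right uniformity (entourages {(x,y). x * inverse(y) \<in> U},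
  U a neighbourhood of 1).  Filters on the carrier are filters on the ambient type
  that eventually lie in the carrier.\<close>
definition right_cauchy :: "('a, 'b) monoid_scheme \<Rightarrow> 'a topology \<Rightarrow> 'a filter \<Rightarrow> bool" where
  "right_cauchy G T F \<longleftrightarrow>
     F \<noteq> bot \<and> eventually (\<lambda>x. x \<in> carrier G) F \<and>
     (\<forall>U. openin T U \<and> \<one>\<^bsub>G\<^esub> \<in> U \<longrightarrow>
        (\<exists>A. eventually (\<lambda>x. x \<in> A) F \<and>
             (\<forall>x\<in>A. \<forall>y\<in>A. x \<otimes>\<^bsub>G\<^esub> inv\<^bsub>G\<^esub> y \<in> U)))"

text \<open>Minimal Cauchy filters (in Isabelle's order, F \<le> F' means F is finer).\<close>
definition min_right_cauchy :: "('a, 'b) monoid_scheme \<Rightarrow> 'a topology \<Rightarrow> 'a filter \<Rightarrow> bool" where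
  "min_right_cauchy G T F \<longleftrightarrow>
     right_cauchy G T F \<and> (\<forall>F'. right_cauchy G T F' \<and> F \<le> F' \<longrightarrow> F' = F)"

definition completion :: "('a, 'b) monoid_scheme \<Rightarrow> 'a topology \<Rightarrow> 'a filter set" where
  "completion G T = {F. min_right_cauchy G T F}"

text \<open>The continuous extension of the identity to completions (for a coarser
  topology S): send F to the unique minimal S-Cauchy filter coarser than F.
  The same map, applied with T, realises the identification of the completion of a
  subgroup with the closure of the subgroup in the completion.\<close>
definition compl_map :: "('a, 'b) monoid_scheme \<Rightarrow> 'a topology \<Rightarrow> 'a filter \<Rightarrow> 'a filter" where
  "compl_map G S F = (THE F'. min_right_cauchy G S F' \<and> F \<le> F')"

text \<open>The identity element of the completion: image of 1 under the canonical embedding,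
  i.e. the neighbourhood filter of 1.\<close>
definition compl_one :: "('a, 'b) monoid_scheme \<Rightarrow> 'a topology \<Rightarrow> 'a filter" where
  "compl_one G S = nhdsin S \<one>\<^bsub>G\<^esub>"

definition ker_ext_id :: "('a, 'b) monoid_scheme \<Rightarrow> 'a topology \<Rightarrow> 'a topology \<Rightarrow> 'a filter set" where
  "ker_ext_id G T S = {F \<in> completion G T. compl_map G S F = compl_one G S}"

end

theory Submission
  imports Defs
begin

lemma cm_mult:
  fixes G :: "('a, 'b) monoid_scheme"
  assumes "group_topology G S" "continuous_map Z S g" "continuous_map Z S h"
  shows "continuous_map Z S (\<lambda>p. g p \<otimes>\<^bsub>G\<^esub> h p)"
proof -
  have cm: "continuous_map (prod_topology S S) S (\<lambda>(x, y). x \<otimes>\<^bsub>G\<^esub> y)"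
    using assms(1) by (simp add: group_topology_def)
  have "continuous_map Z (prod_topology S S) (\<lambda>p. (g p, h p))"
    using assms(2,3) by (simp add: continuous_map_paired)
  from continuous_map_compose[OF this cm] show ?thesis by (simp add: o_def)
qed

lemma cm_inv:
  fixes G :: "('a, 'b) monoid_scheme"
  assumes "group_topology G S" "continuous_map Z S g"
  shows "continuous_map Z S (\<lambda>p. inv\<^bsub>G\<^esub> g p)"
proof -
  have cm: "continuous_map S S (\<lambda>x. inv\<^bsub>G\<^esub> x)"
    using assms(1) by (simp add: group_topology_def)
  from continuous_map_compose[OF assms(2) cm] show ?thesis by (simp add: o_def)
qed

context group
begin

lemma small_nbhd:
  assumes "group_topology G S" "openin S U" "\<one>\<^bsub>G\<^esub> \<in> U"
  shows "\<exists>W. openin S W \<and> \<one>\<^bsub>G\<^esub> \<in> W \<and>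
           (\<forall>a\<in>W. \<forall>b\<in>W. \<forall>c\<in>W. a \<otimes>\<^bsub>G\<^esub> b \<otimes>\<^bsub>G\<^esub> inv\<^bsub>G\<^esub> c \<in> U)"
proof -
  let ?P = "prod_topology S (prod_topology S S)"
  let ?f = "\<lambda>p. fst p \<otimes> fst (snd p) \<otimes> inv (snd (snd p))"
  have c1: "continuous_map ?P S fst" by (rule continuous_map_fst)
  have c2: "continuous_map ?P S (\<lambda>p. fst (snd p))"
    using continuous_map_fst_of[OF continuous_map_snd[of S "prod_topology S S"]]
    by (simp add: o_def)
  have c3: "continuous_map ?P S (\<lambda>p. snd (snd p))"
    using continuous_map_snd_of[OF continuous_map_snd[of S "prod_topology S S"]]
    by (simp add: o_def)
  have cf: "continuous_map ?P S ?f"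
    by (rule cm_mult[OF assms(1) cm_mult[OF assms(1) c1 c2] cm_inv[OF assms(1) c3]])
  have op: "openin ?P {x \<in> topspace ?P. ?f x \<in> U}"
    by (rule openin_continuous_map_preimage[OF cf assms(2)])
  have ts: "topspace S = carrier G" using assms(1) by (simp add: group_topology_def)
  have mem: "(\<one>, (\<one>, \<one>)) \<in> {x \<in> topspace ?P. ?f x \<in> U}"
    using ts assms(3) by simp
  let ?Pre = "{x \<in> topspace ?P. ?f x \<in> U}"
  obtain U1 V where U1: "openin S U1" "openin (prod_topology S S) V" "\<one> \<in> U1" "(\<one>,\<one>) \<in> V"
    "U1 \<times> V \<subseteq> ?Pre"
    using openin_prod_topology_alt[THEN iffD1, OF op, rule_format, OF mem] by blast
  obtain U2 U3 where U2: "openin S U2" "openin S U3" "\<one> \<in> U2" "\<one> \<in> U3" "U2 \<times> U3 \<subseteq> V"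
    using openin_prod_topology_alt[THEN iffD1, OF U1(2), rule_format, OF U1(4)] by blast
  show ?thesis
  proof (intro exI conjI ballI)
    show "openin S (U1 \<inter> U2 \<inter> U3)" using U1 U2 by auto
    show "\<one> \<in> U1 \<inter> U2 \<inter> U3" using U1 U2 by auto
    fix a b c assume "a \<in> U1 \<inter> U2 \<inter> U3" "b \<in> U1 \<inter> U2 \<inter> U3" "c \<in> U1 \<inter> U2 \<inter> U3"
    then have "(b, c) \<in> V" using U2(5) by blast
    then have "(a, (b, c)) \<in> U1 \<times> V" using \<open>a \<in> U1 \<inter> U2 \<inter> U3\<close> by blast
    then have "(a, (b, c)) \<in> ?Pre" using U1(5) by blast
    then show "a \<otimes> b \<otimes> inv c \<in> U" by simp
  qed
qed


lemma min_cauchy_ex1: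
  assumes TS: "group_topology G S" and CF: "right_cauchy G S F"
  shows "\<exists>!F'. min_right_cauchy G S F' \<and> F \<le> F'"
proof -
  have ts: "topspace S = carrier G" using TS by (simp add: group_topology_def)
  define I where "I = {(A,U). eventually (\<lambda>x. x\<in>A) F \<and> A \<subseteq> carrier G \<and> openin S U \<and> \<one> \<in> U}"
  define M where "M = (\<lambda>(A,U). {u \<otimes> a | u a. u \<in> U \<and> a \<in> A})"
  define F0 where "F0 = (INF i\<in>I. principal (M i))"
  have Fnb: "F \<noteq> bot" and Fc: "eventually (\<lambda>x. x \<in> carrier G) F"
    using CF by (auto simp: right_cauchy_def)
  have Ine: "(carrier G, carrier G) \<in> I"
    using Fc ts openin_topspace[of S] by (auto simp: I_def)
  have dir: "\<exists>x\<in>I. principal (M x) \<le> inf (principal (M a)) (principal (M b))"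
    if "a \<in> I" "b \<in> I" for a b
  proof -
    obtain A1 U1 where a: "a = (A1,U1)" by (cases a)
    obtain A2 U2 where b: "b = (A2,U2)" by (cases b)
    have "(A1 \<inter> A2, U1 \<inter> U2) \<in> I" using that a b
      by (auto simp: I_def eventually_conj_iff)
    moreover have "M (A1 \<inter> A2, U1 \<inter> U2) \<subseteq> M a \<inter> M b"
      unfolding a b M_def by fast
    ultimately show ?thesis unfolding inf_principal principal_le_iff by blast
  qed
  have Mmem: "u \<otimes> a \<in> M (A,U)" if "u \<in> U" "a \<in> A" for u a A U
    unfolding M_def using that by blast
  have evF0: "eventually P F0 \<longleftrightarrow> (\<exists>A U. (A,U) \<in> I \<and> (\<forall>x \<in> M (A,U). P x))" for P
    unfolding F0_def
    by (subst eventually_INF_base) (use Ine dir in \<open>auto simp: eventually_principal\<close>)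
  have le0: "F \<le> F0"
    unfolding le_filter_def
  proof (intro allI impI)
    fix P assume "eventually P F0"
    then obtain A U where AU: "(A,U) \<in> I" "\<forall>x \<in> M (A,U). P x" by (auto simp: evF0)
    have "\<forall>x\<in>A. P x"
    proof
      fix x assume x: "x \<in> A"
      then have "x \<in> carrier G" using AU(1) by (auto simp: I_def)
      then have "x \<in> M (A,U)" using x AU(1) Mmem[of \<one> U x A] by (simp add: I_def)
      then show "P x" using AU(2) by blast
    qed
    moreover have "eventually (\<lambda>x. x \<in> A) F" using AU(1) by (auto simp: I_def)
    ultimately show "eventually P F" by (auto elim: eventually_mono)
  qed
  have nb0: "F0 \<noteq> bot"
  proof
    assume "F0 = bot"
    then have "eventually (\<lambda>x. False) F0" by simp
    then obtain A U where AU: "(A,U) \<in> I" "\<forall>x \<in> M (A,U). False" by (auto simp: evF0)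
    have "\<forall>x\<in>A. False"
    proof
      fix x assume x: "x \<in> A"
      then have "x \<in> carrier G" using AU(1) by (auto simp: I_def)
      then have "x \<in> M (A,U)" using x AU(1) Mmem[of \<one> U x A] by (simp add: I_def)
      then show False using AU(2) by blast
    qed
    moreover have "eventually (\<lambda>x. x \<in> A) F" using AU(1) by (auto simp: I_def)
    ultimately have "eventually (\<lambda>x. False) F" by (auto elim: eventually_mono)
    then show False using Fnb by simp
  qed
  have c0: "eventually (\<lambda>x. x \<in> carrier G) F0"
  proof -
    have "\<forall>x\<in>M (carrier G, carrier G). x \<in> carrier G" unfolding M_def by auto
    then show ?thesis unfolding evF0 using Ine by blast
  qed
  have cauchy0: "right_cauchy G S F0"
    unfolding right_cauchy_def
  proof (intro conjI nb0 c0 allI impI)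
    fix U assume U: "openin S U \<and> \<one> \<in> U"
    have "\<exists>W. openin S W \<and> \<one> \<in> W \<and> (\<forall>a\<in>W. \<forall>b\<in>W. \<forall>c\<in>W. a \<otimes> b \<otimes> inv c \<in> U)"
      using U by (intro small_nbhd[OF TS]) auto
    then obtain W where W: "openin S W" "\<one> \<in> W"
      "\<forall>a\<in>W. \<forall>b\<in>W. \<forall>c\<in>W. a \<otimes> b \<otimes> inv c \<in> U"
      by (elim exE conjE) blast
    have Wc: "W \<subseteq> carrier G" using openin_subset[OF W(1)] ts by simp
    obtain A where A: "eventually (\<lambda>x. x \<in> A) F" "\<forall>x\<in>A. \<forall>y\<in>A. x \<otimes> inv y \<in> W"
      using CF W(1,2) unfolding right_cauchy_def by blast
    have IA: "(A \<inter> carrier G, W) \<in> I"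
      using A(1) Fc W by (auto simp: I_def eventually_conj_iff)
    show "\<exists>A. eventually (\<lambda>x. x \<in> A) F0 \<and> (\<forall>x\<in>A. \<forall>y\<in>A. x \<otimes> inv y \<in> U)"
    proof (intro exI conjI ballI)
      show "eventually (\<lambda>x. x \<in> M (A \<inter> carrier G, W)) F0"
        unfolding evF0 using IA by blast
      fix x y assume "x \<in> M (A \<inter> carrier G, W)" "y \<in> M (A \<inter> carrier G, W)"
      then obtain w1 a1 w2 a2 where xy: "x = w1 \<otimes> a1" "y = w2 \<otimes> a2" "w1 \<in> W" "w2 \<in> W"
        "a1 \<in> A" "a2 \<in> A" "a1 \<in> carrier G" "a2 \<in> carrier G"
        unfolding M_def by blast
      have wc: "w1 \<in> carrier G" "w2 \<in> carrier G" using xy Wc by auto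
      have e: "x \<otimes> inv y = w1 \<otimes> (a1 \<otimes> inv a2) \<otimes> inv w2"
        using xy wc by (simp add: inv_mult_group m_assoc)
      have mid: "a1 \<otimes> inv a2 \<in> W" using A(2) xy(5,6) by blast
      have "w1 \<otimes> (a1 \<otimes> inv a2) \<otimes> inv w2 \<in> U" using W(3) xy(3,4) mid by blast
      then show "x \<otimes> inv y \<in> U" by (simp only: e)
    qed
  qed
  have maxl: "F' \<le> F0" if CF': "right_cauchy G S F'" and le: "F \<le> F'" for F'
    unfolding le_filter_def
  proof (intro allI impI)
    fix P assume "eventually P F0"
    then obtain A U where AU: "(A,U) \<in> I" "\<forall>x \<in> M (A,U). P x" by (auto simp: evF0)
    then have U: "openin S U" "\<one> \<in> U" and Ac: "A \<subseteq> carrier G" and AF: "eventually (\<lambda>x. x\<in>A) F"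
      by (auto simp: I_def)
    obtain C where C: "eventually (\<lambda>x. x \<in> C) F'" "\<forall>x\<in>C. \<forall>y\<in>C. x \<otimes> inv y \<in> U"
      using CF' U unfolding right_cauchy_def by blast
    have C': "eventually (\<lambda>x. x \<in> C \<and> x \<in> carrier G) F'"
      using C(1) CF' unfolding right_cauchy_def by (auto simp: eventually_conj_iff)
    then have "eventually (\<lambda>x. x \<in> C \<and> x \<in> carrier G) F" using le by (auto simp: le_filter_def)
    then have "eventually (\<lambda>x. (x \<in> C \<and> x \<in> carrier G) \<and> x \<in> A) F" using AF by (auto simp: eventually_conj_iff)
    then obtain c where c: "c \<in> C" "c \<in> carrier G" "c \<in> A" using eventually_happens'[OF Fnb] by blast
    have "P x" if x: "x \<in> C \<and> x \<in> carrier G" for x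
    proof -
      have "x = (x \<otimes> inv c) \<otimes> c" using x c by (simp add: m_assoc)
      moreover have "x \<otimes> inv c \<in> U" using C(2) x c by blast
      ultimately have "x \<in> M (A,U)" using c Mmem[of "x \<otimes> inv c" U c A] by metis
      then show "P x" using AU(2) by blast
    qed
    then show "eventually P F'" using C' by (auto elim: eventually_mono)
  qed
  have min0: "min_right_cauchy G S F0"
    unfolding min_right_cauchy_def
  proof (intro conjI cauchy0 allI impI)
    fix F'' assume "right_cauchy G S F'' \<and> F0 \<le> F''"
    then have "F'' \<le> F0" "F0 \<le> F''" using maxl[of F''] le0 order.trans[OF le0] by blast+
    then show "F'' = F0" by (rule order.antisym)
  qed
  show ?thesis
  proof (rule ex1I[of _ F0])
    show "min_right_cauchy G S F0 \<and> F \<le> F0" using min0 le0 by blast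
    fix F' assume "min_right_cauchy G S F' \<and> F \<le> F'"
    then show "F' = F0" using maxl[of F'] cauchy0 unfolding min_right_cauchy_def by blast
  qed
qed


lemma sub_cauchy:
  assumes sg: "subgroup B G"
  shows "right_cauchy (G\<lparr>carrier := B\<rparr>) (subtopology Y B) F \<longleftrightarrow>
         right_cauchy G Y F \<and> eventually (\<lambda>x. x \<in> B) F"
proof
  have Bc: "B \<subseteq> carrier G" and one: "\<one> \<in> B" using sg by (auto simp: subgroup_def)
  assume C: "right_cauchy (G\<lparr>carrier := B\<rparr>) (subtopology Y B) F"
  then have nb: "F \<noteq> bot" and eB: "eventually (\<lambda>x. x \<in> B) F"
    by (auto simp: right_cauchy_def)
  have "right_cauchy G Y F"
    unfolding right_cauchy_def
  proof (intro conjI nb allI impI)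
    show "eventually (\<lambda>x. x \<in> carrier G) F" using eB Bc by (auto elim: eventually_mono)
    fix U assume U: "openin Y U \<and> \<one> \<in> U"
    then have "openin (subtopology Y B) (U \<inter> B)" by (auto simp: openin_subtopology)
    moreover have "\<one>\<^bsub>G\<lparr>carrier := B\<rparr>\<^esub> \<in> U \<inter> B" using U one by simp
    ultimately obtain A where A: "eventually (\<lambda>x. x \<in> A) F"
      "\<forall>x\<in>A. \<forall>y\<in>A. x \<otimes>\<^bsub>G\<lparr>carrier := B\<rparr>\<^esub> inv\<^bsub>G\<lparr>carrier := B\<rparr>\<^esub> y \<in> U \<inter> B"
      using C unfolding right_cauchy_def by meson
    show "\<exists>A. eventually (\<lambda>x. x \<in> A) F \<and> (\<forall>x\<in>A. \<forall>y\<in>A. x \<otimes> inv y \<in> U)"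
    proof (intro exI conjI ballI)
      show "eventually (\<lambda>x. x \<in> A \<inter> B) F" using A(1) eB by (auto simp: eventually_conj_iff)
      fix x y assume xy: "x \<in> A \<inter> B" "y \<in> A \<inter> B"
      then have "x \<otimes>\<^bsub>G\<lparr>carrier := B\<rparr>\<^esub> inv\<^bsub>G\<lparr>carrier := B\<rparr>\<^esub> y \<in> U" using A(2) by blast
      moreover have "inv\<^bsub>G\<lparr>carrier := B\<rparr>\<^esub> y = inv y" using xy m_inv_consistent[OF sg] by blast
      ultimately show "x \<otimes> inv y \<in> U" by simp
    qed
  qed
  then show "right_cauchy G Y F \<and> eventually (\<lambda>x. x \<in> B) F" using eB by blast
next
  have Bc: "B \<subseteq> carrier G" and one: "\<one> \<in> B" using sg by (auto simp: subgroup_def)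
  assume C: "right_cauchy G Y F \<and> eventually (\<lambda>x. x \<in> B) F"
  then have nb: "F \<noteq> bot" and eB: "eventually (\<lambda>x. x \<in> B) F"
    by (auto simp: right_cauchy_def)
  show "right_cauchy (G\<lparr>carrier := B\<rparr>) (subtopology Y B) F"
    unfolding right_cauchy_def
  proof (intro conjI nb allI impI)
    show "eventually (\<lambda>x. x \<in> carrier (G\<lparr>carrier := B\<rparr>)) F" using eB by simp
    fix U assume U: "openin (subtopology Y B) U \<and> \<one>\<^bsub>G\<lparr>carrier := B\<rparr>\<^esub> \<in> U"
    then obtain V where V: "openin Y V" "U = V \<inter> B" by (auto simp: openin_subtopology)
    have "\<one> \<in> V" using U V by simp
    then obtain A where A: "eventually (\<lambda>x. x \<in> A) F" "\<forall>x\<in>A. \<forall>y\<in>A. x \<otimes> inv y \<in> V"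
      using C V(1) unfolding right_cauchy_def by meson
    show "\<exists>A. eventually (\<lambda>x. x \<in> A) F \<and>
          (\<forall>x\<in>A. \<forall>y\<in>A. x \<otimes>\<^bsub>G\<lparr>carrier := B\<rparr>\<^esub> inv\<^bsub>G\<lparr>carrier := B\<rparr>\<^esub> y \<in> U)"
    proof (intro exI conjI ballI)
      show "eventually (\<lambda>x. x \<in> A \<inter> B) F" using A(1) eB by (auto simp: eventually_conj_iff)
      fix x y assume xy: "x \<in> A \<inter> B" "y \<in> A \<inter> B"
      have "x \<otimes> inv y \<in> B" using xy sg by (auto intro: subgroup.m_closed subgroup.m_inv_closed)
      then show "x \<otimes>\<^bsub>G\<lparr>carrier := B\<rparr>\<^esub> inv\<^bsub>G\<lparr>carrier := B\<rparr>\<^esub> y \<in> U"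
        using A(2) xy V(2) m_inv_consistent[OF sg] by auto
    qed
  qed
qed

lemma absorb:
  assumes sg: "subgroup B G" and BY: "openin Y B" and CF': "right_cauchy G Y F'"
    and le: "F \<le> F'" and nb: "F \<noteq> bot" and eB: "eventually (\<lambda>x. x \<in> B) F"
  shows "eventually (\<lambda>x. x \<in> B) F'"
proof -
  have Bc: "B \<subseteq> carrier G" and one: "\<one> \<in> B" using sg by (auto simp: subgroup_def)
  obtain A where A: "eventually (\<lambda>x. x \<in> A) F'" "\<forall>x\<in>A. \<forall>y\<in>A. x \<otimes> inv y \<in> B"
    using CF' BY one unfolding right_cauchy_def by meson
  have A': "eventually (\<lambda>x. x \<in> A \<and> x \<in> carrier G) F'"
    using A(1) CF' unfolding right_cauchy_def by (auto simp: eventually_conj_iff)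
  then have "eventually (\<lambda>x. x \<in> A \<and> x \<in> carrier G) F" using le by (auto simp: le_filter_def)
  then have "eventually (\<lambda>x. (x \<in> A \<and> x \<in> carrier G) \<and> x \<in> B) F" using eB by (auto simp: eventually_conj_iff)
  then obtain c where c: "c \<in> A" "c \<in> carrier G" "c \<in> B" using eventually_happens'[OF nb] by blast
  have "x \<in> B" if x: "x \<in> A \<and> x \<in> carrier G" for x
  proof -
    have e: "x = (x \<otimes> inv c) \<otimes> c" using x c by (simp add: m_assoc)
    have "x \<otimes> inv c \<in> B" using A(2) x c by blast
    then have "(x \<otimes> inv c) \<otimes> c \<in> B" using c sg by (auto intro: subgroup.m_closed)
    then show ?thesis using e by simp
  qed
  then show ?thesis using A' by (auto elim: eventually_mono)
qed

lemma min_sub: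
  assumes sg: "subgroup B G" and BY: "openin Y B" and eB: "eventually (\<lambda>x. x \<in> B) F"
  shows "min_right_cauchy (G\<lparr>carrier := B\<rparr>) (subtopology Y B) F \<longleftrightarrow> min_right_cauchy G Y F"
proof
  assume m: "min_right_cauchy (G\<lparr>carrier := B\<rparr>) (subtopology Y B) F"
  then have C: "right_cauchy G Y F" using sub_cauchy[OF sg] by (auto simp: min_right_cauchy_def)
  then have nb: "F \<noteq> bot" by (simp add: right_cauchy_def)
  show "min_right_cauchy G Y F"
    unfolding min_right_cauchy_def
  proof (intro conjI C allI impI)
    fix F'' assume h: "right_cauchy G Y F'' \<and> F \<le> F''"
    then have "eventually (\<lambda>x. x \<in> B) F''" using absorb[OF sg BY _ _ nb eB] by blast
    then have "right_cauchy (G\<lparr>carrier := B\<rparr>) (subtopology Y B) F''" using h sub_cauchy[OF sg] by blast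
    then show "F'' = F" using m h unfolding min_right_cauchy_def by blast
  qed
next
  assume m: "min_right_cauchy G Y F"
  then have C: "right_cauchy G Y F" by (simp add: min_right_cauchy_def)
  show "min_right_cauchy (G\<lparr>carrier := B\<rparr>) (subtopology Y B) F"
    unfolding min_right_cauchy_def
  proof (intro conjI allI impI)
    show "right_cauchy (G\<lparr>carrier := B\<rparr>) (subtopology Y B) F" using C eB sub_cauchy[OF sg] by blast
    fix F'' assume h: "right_cauchy (G\<lparr>carrier := B\<rparr>) (subtopology Y B) F'' \<and> F \<le> F''"
    then have "right_cauchy G Y F''" using sub_cauchy[OF sg] by blast
    then show "F'' = F" using m h unfolding min_right_cauchy_def by blast
  qed
qed

lemma compl_map_sub:
  assumes sg: "subgroup B G" and BY: "openin Y B" and C: "right_cauchy G Y F"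
    and eB: "eventually (\<lambda>x. x \<in> B) F"
  shows "compl_map (G\<lparr>carrier := B\<rparr>) (subtopology Y B) F = compl_map G Y F"
proof -
  have nb: "F \<noteq> bot" using C by (simp add: right_cauchy_def)
  have "(\<lambda>F'. min_right_cauchy (G\<lparr>carrier := B\<rparr>) (subtopology Y B) F' \<and> F \<le> F') =
        (\<lambda>F'. min_right_cauchy G Y F' \<and> F \<le> F')"
  proof (rule ext, rule iffI)
    fix F' assume h: "min_right_cauchy (G\<lparr>carrier := B\<rparr>) (subtopology Y B) F' \<and> F \<le> F'"
    then have "eventually (\<lambda>x. x \<in> B) F'"
      unfolding min_right_cauchy_def right_cauchy_def by simp
    then show "min_right_cauchy G Y F' \<and> F \<le> F'" using h min_sub[OF sg BY] by blast
  next
    fix F' assume h: "min_right_cauchy G Y F' \<and> F \<le> F'"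
    then have "eventually (\<lambda>x. x \<in> B) F'"
      using absorb[OF sg BY _ _ nb eB] unfolding min_right_cauchy_def by blast
    then show "min_right_cauchy (G\<lparr>carrier := B\<rparr>) (subtopology Y B) F' \<and> F \<le> F'"
      using h min_sub[OF sg BY] by blast
  qed
  then show ?thesis unfolding compl_map_def by simp
qed

end


lemma cauchy_mono:
  "right_cauchy G T F \<Longrightarrow> (\<forall>U. openin S U \<longrightarrow> openin T U) \<Longrightarrow> right_cauchy G S F"
  unfolding right_cauchy_def by meson

lemma nhdsin_sub:
  assumes "openin Y B" "a \<in> B"
  shows "nhdsin (subtopology Y B) a = nhdsin Y a"
proof (rule filter_eq_iff[THEN iffD2], intro allI)
  fix P
  have a: "a \<in> topspace Y" using assms openin_subset by blast
  show "eventually P (nhdsin (subtopology Y B) a) = eventually P (nhdsin Y a)"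
  proof
    assume "eventually P (nhdsin (subtopology Y B) a)"
    then obtain S where S: "openin (subtopology Y B) S" "a \<in> S" "\<forall>x\<in>S. P x"
      using a assms(2) by (auto simp: eventually_nhdsin)
    then obtain T where T: "openin Y T" "S = T \<inter> B" by (auto simp: openin_subtopology)
    have "openin Y (T \<inter> B)" using T assms(1) by auto
    then show "eventually P (nhdsin Y a)" using S T by (auto simp: eventually_nhdsin)
  next
    assume "eventually P (nhdsin Y a)"
    then obtain S where S: "openin Y S" "a \<in> S" "\<forall>x\<in>S. P x"
      using a by (auto simp: eventually_nhdsin)
    have "openin (subtopology Y B) (S \<inter> B)" using S by (auto simp: openin_subtopology)
    then show "eventually P (nhdsin (subtopology Y B) a)" using S assms(2)
      by (auto simp: eventually_nhdsin)
  qed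
qed

theorem corollary1p3:
  fixes G :: "('a, 'b) monoid_scheme" and B N :: "'a set" and \<T> \<S> :: "'a topology"
  assumes "group G"
    and "BN_pair G B N"
    and "group_topology G \<T>" and "group_topology G \<S>"
    and "\<forall>U. openin \<S> U \<longrightarrow> openin \<T> U"
    and "openin \<S> B"
  shows "ker_ext_id G \<T> \<S> =
         compl_map G \<T> ` ker_ext_id (G\<lparr>carrier := B\<rparr>) (subtopology \<T> B) (subtopology \<S> B)"
proof -
  interpret group G by fact
  have sg: "subgroup B G" using assms(2) by (simp add: BN_pair_def)
  have one: "\<one>\<^bsub>G\<^esub> \<in> B" using sg by (simp add: subgroup.one_closed)
  have BT: "openin \<T> B" using assms(5,6) by blast
  have onesub: "compl_one (G\<lparr>carrier := B\<rparr>) (subtopology \<S> B) = compl_one G \<S>"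
    unfolding compl_one_def using nhdsin_sub[OF assms(6) one] by simp
  have keq: "ker_ext_id (G\<lparr>carrier := B\<rparr>) (subtopology \<T> B) (subtopology \<S> B) = ker_ext_id G \<T> \<S>"
  proof (intro Set.set_eqI iffI)
    fix F assume "F \<in> ker_ext_id (G\<lparr>carrier := B\<rparr>) (subtopology \<T> B) (subtopology \<S> B)"
    then have m: "min_right_cauchy (G\<lparr>carrier := B\<rparr>) (subtopology \<T> B) F"
      and k: "compl_map (G\<lparr>carrier := B\<rparr>) (subtopology \<S> B) F = compl_one (G\<lparr>carrier := B\<rparr>) (subtopology \<S> B)"
      by (auto simp: ker_ext_id_def completion_def)
    then have eB: "eventually (\<lambda>x. x \<in> B) F"
      unfolding min_right_cauchy_def right_cauchy_def by simp
    have mG: "min_right_cauchy G \<T> F" using m min_sub[OF sg BT eB] by blast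
    then have CS: "right_cauchy G \<S> F"
      using cauchy_mono[OF _ assms(5)] by (auto simp: min_right_cauchy_def)
    have "compl_map G \<S> F = compl_one G \<S>"
      using k compl_map_sub[OF sg assms(6) CS eB] onesub by simp
    then show "F \<in> ker_ext_id G \<T> \<S>" using mG by (simp add: ker_ext_id_def completion_def)
  next
    fix F assume "F \<in> ker_ext_id G \<T> \<S>"
    then have mG: "min_right_cauchy G \<T> F" and k: "compl_map G \<S> F = compl_one G \<S>"
      by (auto simp: ker_ext_id_def completion_def)
    then have CS: "right_cauchy G \<S> F"
      using cauchy_mono[OF _ assms(5)] by (auto simp: min_right_cauchy_def)
    have "min_right_cauchy G \<S> (compl_map G \<S> F) \<and> F \<le> compl_map G \<S> F"
      unfolding compl_map_def by (rule theI'[OF min_cauchy_ex1[OF assms(4) CS]])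
    then have "F \<le> nhdsin \<S> \<one>\<^bsub>G\<^esub>" using k by (simp add: compl_one_def)
    moreover have "eventually (\<lambda>x. x \<in> B) (nhdsin \<S> \<one>\<^bsub>G\<^esub>)"
      using assms(6) one by (auto simp: eventually_nhdsin)
    ultimately have eB: "eventually (\<lambda>x. x \<in> B) F" by (auto simp: le_filter_def)
    have m: "min_right_cauchy (G\<lparr>carrier := B\<rparr>) (subtopology \<T> B) F"
      using mG min_sub[OF sg BT eB] by blast
    have "compl_map (G\<lparr>carrier := B\<rparr>) (subtopology \<S> B) F = compl_one (G\<lparr>carrier := B\<rparr>) (subtopology \<S> B)"
      using k compl_map_sub[OF sg assms(6) CS eB] onesub by simp
    then show "F \<in> ker_ext_id (G\<lparr>carrier := B\<rparr>) (subtopology \<T> B) (subtopology \<S> B)"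
      using m by (simp add: ker_ext_id_def completion_def)
  qed
  have fixp: "compl_map G \<T> F = F" if "F \<in> ker_ext_id G \<T> \<S>" for F
  proof -
    have mG: "min_right_cauchy G \<T> F" using that by (auto simp: ker_ext_id_def completion_def)
    show ?thesis unfolding compl_map_def
    proof (rule the_equality)
      show "min_right_cauchy G \<T> F \<and> F \<le> F" using mG by simp
      fix F' assume "min_right_cauchy G \<T> F' \<and> F \<le> F'"
      then show "F' = F" using mG unfolding min_right_cauchy_def by blast
    qed
  qed
  show ?thesis unfolding keq using fixp by (simp add: image_def)
qed

end
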